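(* Every finite brace of square-free order is supersoluble.
   Context: A brace (skew left brace) is a set $B$ with two binary operations $+$ and $\cdot$ such that $(B,+)$ and $(B,\cdot)$ are groups and $a(b+c)=ab-a+ac$ for all $a,b,c\in B$; its order is $|B|$. For $a,b\in B$ put $\lambda_a(b)=-a+ab$; $\lambda\colon(B,\cdot)\to\operatorname{Aut}(B,+)$ is a homomorphism. An ideal of $B$ is a subset that is a subgroup of both groups, normal in $(B,+)$ and in $(B,\cdot)$, and invariant under all $\lambda_b$; quotients $B/I$ by ideals are braces. $\operatorname{Soc}(B)=\operatorname{Ker}\lambda\cap Z(B,+)$. A brace $B$ is supersoluble if there is a finite chain of ideals $\{0\}=I_0\le\dots\le I_n=B$ such that for each $i$, either $(I_{i+1}/I_i,+)$ is infinite cyclic and $I_{i+1}/I_i\le\operatorname{Soc}(B/I_i)$, or $I_{i+1}/I_i$ has prime order. *)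

theory Defs
  imports "HOL-Algebra.Algebra" "HOL-Computational_Algebra.Squarefree"
begin

text \<open>A (skew left) brace is given by two group structures A (the additive group (B,+),
written in HOL-Algebra's multiplicative notation) and M (the multiplicative group (B,\<cdot>))
on the same carrier, satisfying a(b+c) = ab - a + ac.\<close>

definition brace :: "'a monoid \<Rightarrow> 'a monoid \<Rightarrow> bool" where
  "brace A M \<longleftrightarrow> group A \<and> group M \<and> carrier M = carrier A \<and>
     (\<forall>a\<in>carrier A. \<forall>b\<in>carrier A. \<forall>c\<in>carrier A.
        a \<otimes>\<^bsub>M\<^esub> (b \<otimes>\<^bsub>A\<^esub> c)
          = (a \<otimes>\<^bsub>M\<^esub> b) \<otimes>\<^bsub>A\<^esub> inv\<^bsub>A\<^esub> a \<otimes>\<^bsub>A\<^esub> (a \<otimes>\<^bsub>M\<^esub> c))"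

definition brace_lambda :: "'a monoid \<Rightarrow> 'a monoid \<Rightarrow> 'a \<Rightarrow> 'a \<Rightarrow> 'a" where
  "brace_lambda A M a b = inv\<^bsub>A\<^esub> a \<otimes>\<^bsub>A\<^esub> (a \<otimes>\<^bsub>M\<^esub> b)"

definition brace_ideal :: "'a monoid \<Rightarrow> 'a monoid \<Rightarrow> 'a set \<Rightarrow> bool" where
  "brace_ideal A M I \<longleftrightarrow> subgroup I A \<and> subgroup I M \<and> I \<lhd> A \<and> I \<lhd> M \<and>
     (\<forall>b\<in>carrier A. \<forall>x\<in>I. brace_lambda A M b x \<in> I)"

text \<open>Elements of the quotient B/I are the additive cosets of I (for an ideal these coincide
with the multiplicative cosets). The factor J/I consists of the cosets of I meeting J.\<close>
definition brace_factor :: "'a monoid \<Rightarrow> 'a set \<Rightarrow> 'a set \<Rightarrow> 'a set set" where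
  "brace_factor A I J = {I #>\<^bsub>A\<^esub> x | x. x \<in> J}"

text \<open>J/I \<le> Soc(B/I), unfolded: for x in J, the class of x is central in (B/I,+) and
lies in the kernel of lambda of B/I.\<close>
definition factor_in_socle :: "'a monoid \<Rightarrow> 'a monoid \<Rightarrow> 'a set \<Rightarrow> 'a set \<Rightarrow> bool" where
  "factor_in_socle A M I J \<longleftrightarrow>
     (\<forall>x\<in>J. \<forall>b\<in>carrier A.
        x \<otimes>\<^bsub>A\<^esub> b \<otimes>\<^bsub>A\<^esub> inv\<^bsub>A\<^esub> x \<otimes>\<^bsub>A\<^esub> inv\<^bsub>A\<^esub> b \<in> I \<and>
        brace_lambda A M x b \<otimes>\<^bsub>A\<^esub> inv\<^bsub>A\<^esub> b \<in> I)"

definition factor_infinite_cyclic :: "'a monoid \<Rightarrow> 'a set \<Rightarrow> 'a set \<Rightarrow> bool" where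
  "factor_infinite_cyclic A I J \<longleftrightarrow> infinite (brace_factor A I J) \<and>
     (\<exists>g\<in>J. \<forall>x\<in>J. \<exists>k::int. I #>\<^bsub>A\<^esub> x = I #>\<^bsub>A\<^esub> (g [^]\<^bsub>A\<^esub> k))"

definition supersoluble_brace :: "'a monoid \<Rightarrow> 'a monoid \<Rightarrow> bool" where
  "supersoluble_brace A M \<longleftrightarrow>
     (\<exists>(I :: nat \<Rightarrow> 'a set) n.
        I 0 = {\<one>\<^bsub>A\<^esub>} \<and> I n = carrier A \<and>
        (\<forall>i\<le>n. brace_ideal A M (I i)) \<and>
        (\<forall>i<n. I i \<subseteq> I (Suc i) \<and>
           ((factor_infinite_cyclic A (I i) (I (Suc i)) \<and> factor_in_socle A M (I i) (I (Suc i)))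
            \<or> Factorial_Ring.prime (card (brace_factor A (I i) (I (Suc i)))))))"

end

theory Submission
  imports Defs "HOL-Number_Theory.Residues"
begin

context group begin

lemma cancel1: "a \<in> carrier G \<Longrightarrow> b \<in> carrier G \<Longrightarrow> inv a \<otimes> (a \<otimes> b) = b"
  by (simp add: m_assoc[symmetric])
lemma cancel2: "a \<in> carrier G \<Longrightarrow> b \<in> carrier G \<Longrightarrow> a \<otimes> (inv a \<otimes> b) = b"
  by (simp add: m_assoc[symmetric])

lemma conj_pow:
  assumes "a \<in> carrier G" "y \<in> carrier G"
  shows "a \<otimes> y [^] (n::nat) \<otimes> inv a = (a \<otimes> y \<otimes> inv a) [^] n"
proof (induction n)
  case 0 then show ?case using assms by simp
next
  case (Suc n)
  have "a \<otimes> y [^] Suc n \<otimes> inv a = (a \<otimes> y [^] n \<otimes> inv a) \<otimes> (a \<otimes> y \<otimes> inv a)"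
    using assms by (simp add: m_assoc cancel1)
  then show ?case using Suc by simp
qed

end


lemma (in comm_monoid) telescope:
  assumes c: "\<And>i. c i \<in> carrier G" and f: "\<And>i. f i \<in> carrier G"
    and step: "\<And>i. f i \<otimes> c (Suc i) = c i"
  shows "finprod G f {..<n} \<otimes> c n = c 0"
proof (induction n)
  case 0 then show ?case using c by simp
next
  case (Suc n)
  have fin: "f \<in> {..<n} \<rightarrow> carrier G" using f by simp
  have "finprod G f {..<Suc n} = f n \<otimes> finprod G f {..<n}"
    unfolding lessThan_Suc using finprod_insert[OF _ _ fin f] by simp
  then have "finprod G f {..<Suc n} \<otimes> c (Suc n) = finprod G f {..<n} \<otimes> (f n \<otimes> c (Suc n))"
    using f c fin by (simp add: m_ac)
  also have "\<dots> = c 0" using step Suc by simp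
  finally show ?case .
qed

lemma funpow_mult_fix:
  assumes "\<And>s. s \<in> U \<Longrightarrow> (\<sigma> ^^ p) s = s" "\<sigma> ` U \<subseteq> U" "s \<in> U"
  shows "(\<sigma> ^^ (p * q)) s = s"
proof (induction q)
  case 0 then show ?case by simp
next
  case (Suc q)
  have "(\<sigma> ^^ (p * Suc q)) s = (\<sigma> ^^ p) ((\<sigma> ^^ (p * q)) s)"
    by (simp add: funpow_add)
  then show ?case using Suc assms by simp
qed

lemma funpow_in:
  assumes "\<sigma> ` U \<subseteq> U" "s \<in> U" shows "(\<sigma> ^^ i) s \<in> U"
  using assms by (induction i) auto

lemma funpow_mod:
  assumes "\<And>s. s \<in> U \<Longrightarrow> (\<sigma> ^^ p) s = s" "\<sigma> ` U \<subseteq> U" "s \<in> U"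
  shows "(\<sigma> ^^ k) s = (\<sigma> ^^ (k mod p)) s"
proof -
  have "(\<sigma> ^^ k) s = (\<sigma> ^^ (k mod p + p * (k div p))) s" by simp
  also have "\<dots> = (\<sigma> ^^ (k mod p)) ((\<sigma> ^^ (p * (k div p))) s)" by (simp only: funpow_add o_apply)
  also have "\<dots> = (\<sigma> ^^ (k mod p)) s" using funpow_mult_fix[OF assms] by simp
  finally show ?thesis .
qed

lemma orbit_inj:
  assumes pp: "Factorial_Ring.prime p" and fix_p: "\<And>s. s \<in> U \<Longrightarrow> (\<sigma> ^^ p) s = s" and inv: "\<sigma> ` U \<subseteq> U"
    and nofix: "\<And>s. s \<in> U \<Longrightarrow> \<sigma> s \<noteq> s" and s: "s \<in> U"
  shows "inj_on (\<lambda>i. (\<sigma> ^^ i) s) {..<p}"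
proof -
  have key: False if ij: "i < j" "j < p" and e: "(\<sigma> ^^ i) s = (\<sigma> ^^ j) s" for i j
  proof -
    define d where "d = j - i"
    define u where "u = (\<sigma> ^^ i) s"
    have u: "u \<in> U" unfolding u_def using funpow_in[OF inv s] .
    have d0: "0 < d" "d < p" using ij unfolding d_def by auto
    have jd: "j = d + i" unfolding d_def using ij by simp
    have "(\<sigma> ^^ j) s = (\<sigma> ^^ d) u" unfolding u_def
      by (subst jd) (simp only: funpow_add o_apply)
    then have du: "(\<sigma> ^^ d) u = u" using e u_def by simp
    have dk: "(\<sigma> ^^ (d * k)) u = u" for k
    proof (induction k)
      case 0 then show ?case by simp
    next
      case (Suc k)
      have "(\<sigma> ^^ (d * Suc k)) u = (\<sigma> ^^ d) ((\<sigma> ^^ (d * k)) u)" by (simp add: funpow_add)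
      then show ?case using Suc du by simp
    qed
    have cop: "coprime d p"
      using pp d0 by (metis coprime_commute nat_dvd_not_less prime_imp_coprime_nat)
    then have "gcd d p = 1" by simp
    then obtain a b where ab: "d * a = p * b + 1" using bezout_nat[of d p] d0 by auto
    have "(\<sigma> ^^ (d * a)) u = u" by (rule dk)
    moreover have "(\<sigma> ^^ (d * a)) u = \<sigma> ((\<sigma> ^^ (p * b)) u)"
      unfolding ab by simp
    moreover have "(\<sigma> ^^ (p * b)) u = u" using funpow_mult_fix[OF fix_p inv u] .
    ultimately have "\<sigma> u = u" by simp
    then show False using nofix u by simp
  qed
  show ?thesis
  proof (rule inj_onI)
    fix i j assume "i \<in> {..<p}" "j \<in> {..<p}" "(\<sigma> ^^ i) s = (\<sigma> ^^ j) s"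
    then show "i = j" using key by (metis lessThan_iff linorder_neqE_nat)
  qed
qed

lemma (in comm_monoid) orbit_prod:
  assumes pp: "Factorial_Ring.prime p"
  shows "finite U \<Longrightarrow> \<sigma> ` U \<subseteq> U \<Longrightarrow> (\<And>s. s \<in> U \<Longrightarrow> (\<sigma> ^^ p) s = s) \<Longrightarrow>
    (\<And>s. s \<in> U \<Longrightarrow> \<sigma> s \<noteq> s) \<Longrightarrow> f \<in> U \<rightarrow> carrier G \<Longrightarrow>
    (\<And>s. s \<in> U \<Longrightarrow> finprod G (\<lambda>i. f ((\<sigma> ^^ i) s)) {..<p} = \<one>) \<Longrightarrow>
    finprod G f U = \<one> \<and> p dvd card U"
proof (induction "card U" arbitrary: U rule: less_induct)
  case less
  show ?case
  proof (cases "U = {}")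
    case True then show ?thesis by simp
  next
    case False
    then obtain s where s: "s \<in> U" by auto
    define Orb where "Orb = (\<lambda>i. (\<sigma> ^^ i) s) ` {..<p}"
    have inj: "inj_on (\<lambda>i. (\<sigma> ^^ i) s) {..<p}"
      using orbit_inj[OF pp less.prems(3) less.prems(2) less.prems(4) s] .
    have cardOrb: "card Orb = p" unfolding Orb_def using card_image[OF inj] by simp
    have OrbU: "Orb \<subseteq> U" unfolding Orb_def using funpow_in[OF less.prems(2) s] by auto
    have p0: "0 < p" using pp prime_gt_0_nat by auto
    have inv2: "\<sigma> ` (U - Orb) \<subseteq> U - Orb"
    proof
      fix v assume "v \<in> \<sigma> ` (U - Orb)"
      then obtain u where u: "u \<in> U" "u \<notin> Orb" and v: "v = \<sigma> u" by auto
      have vU: "v \<in> U" using u v less.prems(2) by auto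
      have "v \<notin> Orb"
      proof
        assume "v \<in> Orb"
        then obtain i where i: "i < p" "v = (\<sigma> ^^ i) s" unfolding Orb_def by auto
        have "u = (\<sigma> ^^ p) u" using less.prems(3) u by simp
        also have "\<dots> = (\<sigma> ^^ (p - 1 + 1)) u" using p0 by simp
        also have "\<dots> = (\<sigma> ^^ (p - 1)) v" unfolding funpow_add v by simp
        also have "\<dots> = (\<sigma> ^^ (p - 1 + i)) s" unfolding i(2) funpow_add by simp
        also have "\<dots> = (\<sigma> ^^ ((p - 1 + i) mod p)) s"
          using funpow_mod[OF less.prems(3) less.prems(2) s] by simp
        finally have "u \<in> Orb" unfolding Orb_def using p0 by auto
        then show False using u by simp
      qed
      then show "v \<in> U - Orb" using vU by simp
    qed
    have finOrb: "finite Orb" by (rule finite_subset[OF OrbU less.prems(1)])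
    have cd: "card (U - Orb) = card U - card Orb" by (rule card_Diff_subset[OF finOrb OrbU])
    have cle: "card Orb \<le> card U" by (rule card_mono[OF less.prems(1) OrbU])
    have lt: "card (U - Orb) < card U" using cd cardOrb cle p0 by linarith
    have IH: "finprod G f (U - Orb) = \<one> \<and> p dvd card (U - Orb)"
      by (rule less.hyps[OF lt]) (use less.prems inv2 in auto)
    have fOrb: "f \<in> Orb \<rightarrow> carrier G" using less.prems(5) OrbU by auto
    have "finprod G f Orb = finprod G (\<lambda>i. f ((\<sigma> ^^ i) s)) {..<p}"
      unfolding Orb_def by (rule finprod_reindex[OF fOrb[unfolded Orb_def] inj])
    also have "\<dots> = \<one>" using less.prems(6) s by simp
    finally have POrb: "finprod G f Orb = \<one>" .
    have U: "U = Orb \<union> (U - Orb)" using OrbU by auto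
    have "finprod G f U = finprod G f Orb \<otimes> finprod G f (U - Orb)"
      apply (subst U)
      apply (rule finprod_Un_disjoint)
      using finOrb less.prems(1) less.prems(5) OrbU by auto
    then have "finprod G f U = \<one>" using POrb IH by simp
    moreover have "card U = card Orb + card (U - Orb)"
      using cd cle by linarith
    ultimately show ?thesis using IH cardOrb by simp
  qed
qed

locale tctx = group G for G (structure) +
  fixes p :: nat and x :: 'a
  assumes finG: "finite (carrier G)" and pp: "Factorial_Ring.prime p" and xG: "x \<in> carrier G"
    and ordx: "ord x = p"
    and small: "\<And>r. Factorial_Ring.prime r \<Longrightarrow> r dvd order G \<Longrightarrow> p \<le> r"
    and notsq: "\<not> p^2 dvd order G"
begin

definition P where "P = (\<lambda>i::nat. x [^] i) ` {..<p}"
definition rep where "rep g = (SOME t. t \<in> carrier G \<and> t \<otimes> inv g \<in> P)"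
definition T where "T = rep ` carrier G"
abbreviation PG where "PG \<equiv> G\<lparr>carrier := P\<rparr>"
definition V where "V g = finprod PG (\<lambda>t. t \<otimes> g \<otimes> inv (rep (t \<otimes> g))) T"

lemma p_gt1: "1 < p" using pp prime_gt_1_nat by blast

lemma x_pow_p: "x [^] p = \<one>" using ordx xG pow_ord_eq_1 by metis

lemma x_pow_mod: "x [^] (n::nat) = x [^] (n mod p)"
proof -
  have "x [^] n = x [^] (n mod p + p * (n div p))" by simp
  also have "\<dots> = x [^] (n mod p) \<otimes> (x [^] p) [^] (n div p)"
    using xG by (simp add: nat_pow_mult nat_pow_pow)
  finally show ?thesis using x_pow_p xG by simp
qed

lemma x_pow_inj: "inj_on (\<lambda>i::nat. x [^] i) {..<p}"
proof -
  have "{0..ord x - 1} = {..<p}" using ordx p_gt1 by auto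
  then show ?thesis using ord_inj[OF xG] by simp
qed

lemma x_pow_eq: "x [^] (a::nat) = x [^] (b::nat) \<Longrightarrow> a mod p = b mod p"
proof -
  assume e: "x [^] a = x [^] b"
  have "x [^] (a mod p) = x [^] (b mod p)" using e x_pow_mod[of a] x_pow_mod[of b] by simp
  then show ?thesis by (rule inj_onD[OF x_pow_inj]) (use p_gt1 in auto)
qed

lemma P_sub: "subgroup P G"
proof -
  have e1: "{0..ord x - 1} = {..<p}" using ordx p_gt1 by auto
  have "{x [^] i | i. i \<in> {0 .. ord x - 1}} = (\<lambda>i::nat. x [^] i) ` {0..ord x - 1}" by (rule Setcompr_eq_image)
  also have "\<dots> = P" unfolding P_def e1 ..
  finally have "{x [^] i | i. i \<in> {0 .. ord x - 1}} = P" .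
  then show ?thesis using element_generates_subgroup[OF finG xG] by (simp only:)
qed

lemma P_carrier: "P \<subseteq> carrier G" by (rule subgroup.subset[OF P_sub])

lemma one_P: "\<one> \<in> P" by (rule subgroup.one_closed[OF P_sub])
lemma mult_P: "a \<in> P \<Longrightarrow> b \<in> P \<Longrightarrow> a \<otimes> b \<in> P" by (rule subgroup.m_closed[OF P_sub])
lemma inv_P: "a \<in> P \<Longrightarrow> inv a \<in> P" by (rule subgroup.m_inv_closed[OF P_sub])
lemma x_P: "x \<in> P" unfolding P_def using p_gt1 xG by (intro image_eqI[where x=1]) auto

lemma card_P: "card P = p"
proof -
  have "card P = card {..<p}" unfolding P_def by (rule card_image[OF x_pow_inj])
  then show ?thesis by simp
qed

lemma PG_cg: "comm_group PG"
proof -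
  interpret PGg: group PG using subgroup_imp_group P_sub by blast
  show ?thesis
  proof (rule PGg.group_comm_groupI)
    fix a b assume "a \<in> carrier PG" "b \<in> carrier PG"
    then obtain i j where "a = x [^] (i::nat)" "b = x [^] (j::nat)" unfolding P_def by auto
    then show "a \<otimes>\<^bsub>PG\<^esub> b = b \<otimes>\<^bsub>PG\<^esub> a" using xG by (simp add: nat_pow_mult add.commute)
  qed
qed

lemma rep_spec: "g \<in> carrier G \<Longrightarrow> rep g \<in> carrier G \<and> rep g \<otimes> inv g \<in> P"
  unfolding rep_def by (rule someI[of _ g]) (simp add: one_P)

lemma rep_carrier: "g \<in> carrier G \<Longrightarrow> rep g \<in> carrier G" using rep_spec by metis
lemma rep_P: "g \<in> carrier G \<Longrightarrow> rep g \<otimes> inv g \<in> P" using rep_spec by metis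

lemma rep_cong:
  assumes a: "a \<in> carrier G" and b: "b \<in> carrier G" and ab: "a \<otimes> inv b \<in> P"
  shows "rep a = rep b"
proof -
  have "(\<lambda>t. t \<in> carrier G \<and> t \<otimes> inv a \<in> P) = (\<lambda>t. t \<in> carrier G \<and> t \<otimes> inv b \<in> P)"
  proof (rule ext, rule iffI)
    fix t assume t: "t \<in> carrier G \<and> t \<otimes> inv a \<in> P"
    have "t \<otimes> inv b = (t \<otimes> inv a) \<otimes> (a \<otimes> inv b)" using t a b by (simp add: m_assoc cancel1)
    then show "t \<in> carrier G \<and> t \<otimes> inv b \<in> P" using t ab mult_P by simp
  next
    fix t assume t: "t \<in> carrier G \<and> t \<otimes> inv b \<in> P"
    have "inv (a \<otimes> inv b) = b \<otimes> inv a" using a b by (simp add: inv_mult_group)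
    then have "b \<otimes> inv a \<in> P" using inv_P ab by metis
    moreover have "t \<otimes> inv a = (t \<otimes> inv b) \<otimes> (b \<otimes> inv a)" using t a b by (simp add: m_assoc cancel1)
    ultimately show "t \<in> carrier G \<and> t \<otimes> inv a \<in> P" using t mult_P by simp
  qed
  then show ?thesis unfolding rep_def by simp
qed

lemma rep_eqD:
  assumes a: "a \<in> carrier G" and b: "b \<in> carrier G" and e: "rep a = rep b"
  shows "a \<otimes> inv b \<in> P"
proof -
  have r: "rep a \<in> carrier G" using a rep_carrier by blast
  have "inv (rep a \<otimes> inv a) = a \<otimes> inv (rep a)" using a r by (simp add: inv_mult_group)
  then have "a \<otimes> inv (rep a) \<in> P" using inv_P rep_P[OF a] by metis
  moreover have "a \<otimes> inv b = (a \<otimes> inv (rep a)) \<otimes> (rep b \<otimes> inv b)"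
    using a b r e by (simp add: m_assoc cancel1)
  ultimately show ?thesis using mult_P rep_P[OF b] by simp
qed

lemma rep_rep: "g \<in> carrier G \<Longrightarrow> rep (rep g) = rep g"
  using rep_cong rep_carrier rep_P by metis

lemma rep_mult: assumes a: "a \<in> carrier G" and b: "b \<in> carrier G"
  shows "rep (rep a \<otimes> b) = rep (a \<otimes> b)"
proof (rule rep_cong)
  have r: "rep a \<in> carrier G" using a rep_carrier by blast
  show "rep a \<otimes> b \<in> carrier G" "a \<otimes> b \<in> carrier G" using a b r by auto
  have "rep a \<otimes> b \<otimes> inv (a \<otimes> b) = rep a \<otimes> inv a" using a b r
    by (simp add: inv_mult_group m_assoc cancel2)
  then show "rep a \<otimes> b \<otimes> inv (a \<otimes> b) \<in> P" using rep_P[OF a] by simp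
qed

lemma T_sub: "T \<subseteq> carrier G" unfolding T_def using rep_carrier by auto
lemma T_rep: "t \<in> T \<Longrightarrow> rep t = t" unfolding T_def using rep_rep by auto
lemma rep_T: "g \<in> carrier G \<Longrightarrow> rep g \<in> T" unfolding T_def by (rule imageI)
lemma finT: "finite T" unfolding T_def using finG by simp

lemma fval: assumes t: "t \<in> carrier G" and g: "g \<in> carrier G"
  shows "t \<otimes> g \<otimes> inv (rep (t \<otimes> g)) \<in> P"
proof -
  have tg: "t \<otimes> g \<in> carrier G" using t g by simp
  have r: "rep (t \<otimes> g) \<in> carrier G" using tg rep_carrier by blast
  have "inv (rep (t \<otimes> g) \<otimes> inv (t \<otimes> g)) = t \<otimes> g \<otimes> inv (rep (t \<otimes> g))"
    using tg r by (simp add: inv_mult_group)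
  then show ?thesis using inv_P rep_P[OF tg] by metis
qed

lemma card_T: "card T * p = order G"
proof -
  have bij: "bij_betw (\<lambda>t. P #> t) T (rcosets P)"
  proof (rule bij_betw_imageI)
    show "inj_on (\<lambda>t. P #> t) T"
    proof (rule inj_onI)
      fix t t' assume t: "t \<in> T" and t': "t' \<in> T" and e: "P #> t = P #> t'"
      have tc: "t \<in> carrier G" and tc': "t' \<in> carrier G" using t t' T_sub by auto
      have "t \<in> P #> t'" using e rcos_self[OF tc P_sub] by simp
      then have "t \<otimes> inv t' \<in> P" using subgroup.rcos_module_imp[OF P_sub] tc' is_group by blast
      then have "rep t = rep t'" using rep_cong tc tc' by blast
      then show "t = t'" using T_rep t t' by simp
    qed
    show "(\<lambda>t. P #> t) ` T = rcosets P"
    proof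
      show "(\<lambda>t. P #> t) ` T \<subseteq> rcosets P" using T_sub rcosetsI P_carrier by blast
      show "rcosets P \<subseteq> (\<lambda>t. P #> t) ` T"
      proof
        fix C assume "C \<in> rcosets P"
        then obtain a where a: "a \<in> carrier G" and C: "C = P #> a" unfolding RCOSETS_def by blast
        have "rep a \<in> P #> a"
          using subgroup.rcos_module_rev[OF P_sub is_group a rep_carrier[OF a] rep_P[OF a]] .
        then have "P #> a = P #> rep a" using repr_independence a P_sub by blast
        then show "C \<in> (\<lambda>t. P #> t) ` T" using C rep_T[OF a] by blast
      qed
    qed
  qed
  have "card (rcosets P) * card P = order G" using lagrange P_sub by blast
  then show ?thesis using bij_betw_same_card[OF bij] card_P by simp
qed


lemma PG_group: "group PG" using subgroup_imp_group[OF P_sub] .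

lemma f_in: assumes g: "g \<in> carrier G"
  shows "(\<lambda>t. t \<otimes> g \<otimes> inv (rep (t \<otimes> g))) \<in> T \<rightarrow> carrier PG"
proof (rule Pi_I)
  fix t assume "t \<in> T"
  then have "t \<in> carrier G" using T_sub by auto
  then show "t \<otimes> g \<otimes> inv (rep (t \<otimes> g)) \<in> carrier PG" using fval g by simp
qed

lemma V_closed: assumes g: "g \<in> carrier G" shows "V g \<in> P"
proof -
  interpret C: comm_group PG by (rule PG_cg)
  have "V g \<in> carrier PG" unfolding V_def by (rule C.finprod_closed[OF f_in[OF g]])
  then show ?thesis by simp
qed

lemma shift_inj: assumes g: "g \<in> carrier G"
  shows "inj_on (\<lambda>t. rep (t \<otimes> g)) T" and "(\<lambda>t. rep (t \<otimes> g)) ` T = T"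
proof -
  show inj: "inj_on (\<lambda>t. rep (t \<otimes> g)) T"
  proof (rule inj_onI)
    fix t t' assume t: "t \<in> T" and t': "t' \<in> T" and e: "rep (t \<otimes> g) = rep (t' \<otimes> g)"
    have tc: "t \<in> carrier G" and tc': "t' \<in> carrier G" using t t' T_sub by auto
    have "(t \<otimes> g) \<otimes> inv (t' \<otimes> g) \<in> P" using rep_eqD e tc tc' g by simp
    moreover have "(t \<otimes> g) \<otimes> inv (t' \<otimes> g) = t \<otimes> inv t'"
      using tc tc' g by (simp add: inv_mult_group m_assoc cancel2)
    ultimately have "rep t = rep t'" using rep_cong tc tc' by simp
    then show "t = t'" using T_rep t t' by simp
  qed
  have sub: "(\<lambda>t. rep (t \<otimes> g)) ` T \<subseteq> T" using rep_T T_sub g by auto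
  show "(\<lambda>t. rep (t \<otimes> g)) ` T = T" by (rule endo_inj_surj[OF finT sub inj])
qed

lemma V_mult: assumes g: "g \<in> carrier G" and h: "h \<in> carrier G"
  shows "V (g \<otimes> h) = V g \<otimes> V h"
proof -
  interpret C: comm_group PG by (rule PG_cg)
  define F1 where "F1 = (\<lambda>t. t \<otimes> g \<otimes> inv (rep (t \<otimes> g)))"
  define F2 where "F2 = (\<lambda>s. s \<otimes> h \<otimes> inv (rep (s \<otimes> h)))"
  define \<sigma> where "\<sigma> = (\<lambda>t. rep (t \<otimes> g))"
  have F1P: "F1 \<in> T \<rightarrow> carrier PG" using f_in[OF g] unfolding F1_def .
  have F2P: "F2 \<in> T \<rightarrow> carrier PG" using f_in[OF h] unfolding F2_def .
  have sT: "\<sigma> ` T = T" unfolding \<sigma>_def using shift_inj[OF g] by simp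
  have sinj: "inj_on \<sigma> T" unfolding \<sigma>_def using shift_inj[OF g] by simp
  have F2s: "(\<lambda>t. F2 (\<sigma> t)) \<in> T \<rightarrow> carrier PG"
  proof (rule Pi_I)
    fix t assume "t \<in> T"
    then have "\<sigma> t \<in> T" using sT by auto
    then show "F2 (\<sigma> t) \<in> carrier PG" using F2P by auto
  qed
  have eq: "t \<otimes> (g \<otimes> h) \<otimes> inv (rep (t \<otimes> (g \<otimes> h))) = F1 t \<otimes>\<^bsub>PG\<^esub> F2 (\<sigma> t)"
    if t: "t \<in> T" for t
  proof -
    have tc: "t \<in> carrier G" using t T_sub by auto
    have r: "rep (t \<otimes> g) \<in> carrier G" using rep_carrier tc g by simp
    have rr: "rep (rep (t \<otimes> g) \<otimes> h) = rep (t \<otimes> (g \<otimes> h))"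
      using rep_mult[of "t \<otimes> g" h] tc g h by (simp add: m_assoc)
    have R: "rep (t \<otimes> (g \<otimes> h)) \<in> carrier G" using rep_carrier tc g h by simp
    show ?thesis unfolding F1_def F2_def \<sigma>_def using rr tc r R g h
      by (simp add: m_assoc cancel1)
  qed
  have "V (g \<otimes> h) = finprod PG (\<lambda>t. F1 t \<otimes>\<^bsub>PG\<^esub> F2 (\<sigma> t)) T"
    unfolding V_def
  proof (rule C.finprod_cong')
    show "(\<lambda>t. F1 t \<otimes>\<^bsub>PG\<^esub> F2 (\<sigma> t)) \<in> T \<rightarrow> carrier PG"
    proof (rule Pi_I)
      fix t assume "t \<in> T" then show "F1 t \<otimes>\<^bsub>PG\<^esub> F2 (\<sigma> t) \<in> carrier PG"
        using F1P F2s C.m_closed by (meson PiE)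
    qed
  qed (use eq in auto)
  also have "\<dots> = finprod PG F1 T \<otimes>\<^bsub>PG\<^esub> finprod PG (\<lambda>t. F2 (\<sigma> t)) T"
    by (rule C.finprod_multf[OF F1P F2s])
  also have "finprod PG (\<lambda>t. F2 (\<sigma> t)) T = finprod PG F2 (\<sigma> ` T)"
    by (rule C.finprod_reindex[symmetric]) (use sT F2P sinj in auto)
  also have "\<dots> = finprod PG F2 T" using sT by simp
  finally show ?thesis unfolding V_def F1_def F2_def by simp
qed

lemma V_hom: "group_hom G PG V"
proof -
  have "V \<in> hom G PG" unfolding hom_def using V_closed V_mult by auto
  then show ?thesis
    by (simp add: group_hom_def group_hom_axioms_def is_group PG_group)
qed


lemma conj_fix:
  assumes t: "t \<in> carrier G" and y: "t \<otimes> x \<otimes> inv t \<in> P"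
  shows "t \<otimes> x \<otimes> inv t = x"
proof -
  obtain k where k: "k < p" "t \<otimes> x \<otimes> inv t = x [^] k" using y unfolding P_def by auto
  have k0: "\<not> p dvd k"
  proof
    assume "p dvd k"
    then have "k = 0" using k(1) by (cases "k = 0") (auto dest: dvd_imp_le)
    then have e: "t \<otimes> x \<otimes> inv t = \<one>" using k by simp
    have "t \<otimes> x = (t \<otimes> x \<otimes> inv t) \<otimes> t" using t xG by (simp add: m_assoc)
    then have "t \<otimes> x = t" using e t by simp
    then have "inv t \<otimes> (t \<otimes> x) = inv t \<otimes> t" by simp
    then have "x = \<one>" using t xG by (simp add: cancel1)
    then show False using ordx p_gt1 by simp
  qed
  have iter: "t [^] j \<otimes> x \<otimes> inv (t [^] j) = x [^] (k ^ j)" for j :: nat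
  proof (induction j)
    case 0 show ?case using xG by simp
  next
    case (Suc j)
    have tj: "t [^] j \<in> carrier G" using t by simp
    have "t [^] Suc j \<otimes> x \<otimes> inv (t [^] Suc j) = t [^] j \<otimes> (t \<otimes> x \<otimes> inv t) \<otimes> inv (t [^] j)"
      using t tj xG by (simp add: m_assoc inv_mult_group)
    also have "\<dots> = t [^] j \<otimes> x [^] k \<otimes> inv (t [^] j)" using k by simp
    also have "\<dots> = (t [^] j \<otimes> x \<otimes> inv (t [^] j)) [^] k" using conj_pow tj xG by simp
    also have "\<dots> = x [^] (k ^ j * k)" using Suc xG by (simp add: nat_pow_pow)
    finally show ?case by (simp add: mult.commute)
  qed
  define ot where "ot = ord t"
  have o0: "ot \<noteq> 0" using ord_ge_1[OF finG t] ot_def by simp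
  have cop: "gcd ot (p - 1) = 1"
  proof (rule ccontr)
    assume ne: "gcd ot (p - 1) \<noteq> 1"
    obtain r where r: "Factorial_Ring.prime r" "r dvd gcd ot (p - 1)" using prime_factor_nat[OF ne] by auto
    have "r dvd ot" using r(2) by (metis dvd_trans gcd_dvd1)
    then have "r dvd order G" using ord_dvd_group_order[OF t] ot_def dvd_trans by blast
    then have "p \<le> r" using small r(1) by simp
    moreover have "r \<le> p - 1"
    proof -
      have "r dvd p - 1" using r(2) gcd_dvd2 dvd_trans by blast
      then show ?thesis using p_gt1 by (intro dvd_imp_le) auto
    qed
    ultimately show False using p_gt1 by simp
  qed
  obtain a b where ab: "ot * a = (p - 1) * b + 1" using bezout_nat[OF o0, of "p - 1"] cop by auto
  have "t [^] (ot * a) = (t [^] ot) [^] a" using t by (simp add: nat_pow_pow)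
  then have "t [^] (ot * a) = \<one>" using t ot_def by simp
  then have "x [^] (k ^ (ot * a)) = x" using iter[of "ot * a"] xG by simp
  then have e1: "x [^] (k ^ (ot * a)) = x [^] (1::nat)" using xG by simp
  have c1: "[k ^ (ot * a) = 1] (mod p)" using x_pow_eq[OF e1] unfolding cong_def .
  have ferm: "[k ^ (p - 1) = 1] (mod p)" using fermat_theorem[OF pp k0] .
  have "[k ^ ((p - 1) * b) = 1] (mod p)" using cong_pow[OF ferm, of b] by (simp add: power_mult)
  then have "[k ^ ((p - 1) * b) * k = 1 * k] (mod p)" by (rule cong_mult) (rule cong_refl)
  moreover have "k ^ (ot * a) = k ^ ((p - 1) * b) * k" using ab by (simp add: power_add)
  ultimately have "[k ^ (ot * a) = k] (mod p)" by simp
  then have "[k = 1] (mod p)" using c1 cong_sym cong_trans by blast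
  then have "k mod p = 1 mod p" unfolding cong_def .
  then have "x [^] k = x [^] (1::nat)" using x_pow_mod[of k] x_pow_mod[of 1] by simp
  then show ?thesis using k xG by simp
qed

definition sig where "sig t = rep (t \<otimes> x)"

lemma sig_iter: assumes t: "t \<in> T" shows "(sig ^^ i) t = rep (t \<otimes> x [^] i)"
proof (induction i)
  case 0 then show ?case using t T_rep T_sub by auto
next
  case (Suc i)
  have tc: "t \<in> carrier G" using t T_sub by auto
  have "(sig ^^ Suc i) t = sig ((sig ^^ i) t)" by simp
  also have "\<dots> = sig (rep (t \<otimes> x [^] i))" using Suc by simp
  also have "\<dots> = rep (rep (t \<otimes> x [^] i) \<otimes> x)" by (simp only: sig_def)
  also have "\<dots> = rep (t \<otimes> x [^] i \<otimes> x)" using rep_mult tc xG by simp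
  also have "\<dots> = rep (t \<otimes> x [^] Suc i)" using tc xG by (simp add: m_assoc)
  finally show ?case .
qed

lemma V_x: "V x \<noteq> \<one>"
proof -
  interpret C: comm_group PG by (rule PG_cg)
  define f where "f = (\<lambda>t. t \<otimes> x \<otimes> inv (rep (t \<otimes> x)))"
  define F where "F = {t \<in> T. sig t = t}"
  define U where "U = T - F"
  have fP: "f \<in> T \<rightarrow> carrier PG" unfolding f_def using f_in[OF xG] .
  have sigT: "sig ` T \<subseteq> T" unfolding sig_def using rep_T T_sub xG by auto
  have sigp: "(sig ^^ p) t = t" if "t \<in> T" for t
    using sig_iter[OF that, of p] x_pow_p T_rep[OF that] that T_sub by auto
  have sigU: "sig ` U \<subseteq> U"
  proof
    fix v assume "v \<in> sig ` U"
    then obtain t where t: "t \<in> U" and v: "v = sig t" by auto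
    have tT: "t \<in> T" and tF: "sig t \<noteq> t" using t unfolding U_def F_def by auto
    have vT: "v \<in> T" using sigT tT v by auto
    have "sig v \<noteq> v"
    proof
      assume fx: "sig v = v"
      have it: "(sig ^^ n) v = v" for n by (induction n) (use fx in auto)
      have "t = (sig ^^ p) t" using sigp tT by simp
      also have "\<dots> = (sig ^^ (p - 1 + 1)) t" using p_gt1 by simp
      also have "\<dots> = (sig ^^ (p - 1)) v" unfolding funpow_add v by simp
      also have "\<dots> = v" by (rule it)
      finally show False using tF v by simp
    qed
    then show "v \<in> U" using vT unfolding U_def F_def by auto
  qed
  have sigpU: "(sig ^^ p) s = s" if "s \<in> U" for s using sigp that unfolding U_def by auto
  have nofix: "sig s \<noteq> s" if "s \<in> U" for s using that unfolding U_def F_def by auto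
  have fU: "f \<in> U \<rightarrow> carrier PG" using fP unfolding U_def by auto
  have finU: "finite U" unfolding U_def using finT by simp
  have tele: "finprod PG (\<lambda>i. f ((sig ^^ i) s)) {..<p} = \<one>\<^bsub>PG\<^esub>" if sU: "s \<in> U" for s
  proof -
    have sT: "s \<in> T" using sU unfolding U_def by auto
    have sc: "s \<in> carrier G" using sT T_sub by auto
    define c where "c = (\<lambda>i::nat. rep (s \<otimes> x [^] i) \<otimes> inv (s \<otimes> x [^] i))"
    have cP: "c i \<in> carrier PG" for i unfolding c_def using rep_P sc xG by simp
    have fi: "f ((sig ^^ i) s) \<in> carrier PG" for i
    proof -
      have "(sig ^^ i) s \<in> carrier G" using sig_iter[OF sT] rep_carrier sc xG by simp
      then show ?thesis unfolding f_def using fval xG by simp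
    qed
    have step: "f ((sig ^^ i) s) \<otimes>\<^bsub>PG\<^esub> c (Suc i) = c i" for i
    proof -
      define r where "r = rep (s \<otimes> x [^] i)"
      define R where "R = rep (s \<otimes> x [^] Suc i)"
      have rc: "r \<in> carrier G" unfolding r_def using rep_carrier sc xG by simp
      have Rc: "R \<in> carrier G" unfolding R_def using rep_carrier sc xG by simp
      have xi: "x [^] i \<in> carrier G" using xG by simp
      have rr: "rep (r \<otimes> x) = R" unfolding r_def R_def
        using rep_mult[of "s \<otimes> x [^] i" x] sc xG by (simp add: m_assoc)
      have fr: "f ((sig ^^ i) s) = r \<otimes> x \<otimes> inv R"
        unfolding f_def sig_iter[OF sT] r_def[symmetric] rr ..
      have iv: "inv (s \<otimes> x [^] Suc i) = inv x \<otimes> inv (s \<otimes> x [^] i)"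
        using sc xG xi by (simp add: inv_mult_group m_assoc)
      have Z: "inv (s \<otimes> x [^] i) \<in> carrier G" using sc xi by simp
      have "f ((sig ^^ i) s) \<otimes>\<^bsub>PG\<^esub> c (Suc i) = r \<otimes> x \<otimes> inv R \<otimes> (R \<otimes> (inv x \<otimes> inv (s \<otimes> x [^] i)))"
        unfolding c_def R_def[symmetric] iv using fr by simp
      also have "\<dots> = r \<otimes> inv (s \<otimes> x [^] i)" using rc Rc xG Z by (simp add: m_assoc cancel1 cancel2)
      finally show ?thesis unfolding c_def r_def .
    qed
    have c0: "c 0 = \<one>" unfolding c_def using sc T_rep[OF sT] by simp
    have cp: "c p = \<one>" unfolding c_def using sc T_rep[OF sT] x_pow_p by simp
    have "finprod PG (\<lambda>i. f ((sig ^^ i) s)) {..<p} \<otimes>\<^bsub>PG\<^esub> c p = c 0"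
      by (rule C.telescope[where c=c and f="\<lambda>i. f ((sig ^^ i) s)", OF cP fi step])
    moreover have "finprod PG (\<lambda>i. f ((sig ^^ i) s)) {..<p} \<in> carrier PG"
      by (rule C.finprod_closed) (use fi in auto)
    ultimately show ?thesis using c0 cp P_carrier by auto
  qed
  have oU: "finprod PG f U = \<one>\<^bsub>PG\<^esub> \<and> p dvd card U"
    by (rule C.orbit_prod[OF pp finU sigU sigpU nofix fU tele])
  have fF: "f t = x" if "t \<in> F" for t
  proof -
    have tT: "t \<in> T" and st: "rep (t \<otimes> x) = t" using that unfolding F_def sig_def by auto
    have tc: "t \<in> carrier G" using tT T_sub by auto
    have "t \<otimes> x \<otimes> inv t \<in> P" using fval[OF tc xG] st by simp
    then show ?thesis unfolding f_def st using conj_fix tc by simp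
  qed
  have finF: "finite F" unfolding F_def using finT by simp
  have fFP: "f \<in> F \<rightarrow> carrier PG" using fP unfolding F_def by auto
  have xPG: "x \<in> carrier PG" using x_P by simp
  have "finprod PG f F = finprod PG (\<lambda>_. x) F"
    by (rule C.finprod_cong') (use fF xPG in auto)
  also have "\<dots> = x [^]\<^bsub>PG\<^esub> card F" by (rule C.finprod_const[OF xPG])
  also have "\<dots> = x [^] card F" by (rule nat_pow_consistent[symmetric])
  finally have pF: "finprod PG f F = x [^] card F" .
  have TFU: "T = F \<union> U" unfolding U_def F_def by auto
  have "V x = finprod PG f T" unfolding V_def f_def ..
  also have "\<dots> = finprod PG f F \<otimes>\<^bsub>PG\<^esub> finprod PG f U"
    apply (subst TFU)
    apply (rule C.finprod_Un_disjoint)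
    using finF finU fU fFP by (auto simp: U_def)
  also have "\<dots> = x [^] card F" using pF oU xG by simp
  finally have Vx: "V x = x [^] card F" .
  have "card (F \<union> U) = card F + card U"
    by (rule card_Un_disjoint[OF finF finU]) (auto simp: U_def)
  then have cT: "card T = card F + card U" using TFU by simp
  have "\<not> p dvd card T"
  proof
    assume "p dvd card T"
    then obtain q where "card T = p * q" by auto
    then have "order G = p^2 * q" using card_T by (simp add: power2_eq_square mult_ac)
    then show False using notsq by simp
  qed
  then have "\<not> p dvd card F" using cT oU dvd_add by metis
  then show ?thesis using Vx pow_eq_id[OF xG] ordx by simp
qed

lemma img_V: "V ` carrier G = P"
proof -
  have sg: "subgroup (V ` carrier G) PG" using group_hom.img_is_subgroup[OF V_hom] .
  have "card (rcosets\<^bsub>PG\<^esub> (V ` carrier G)) * card (V ` carrier G) = order PG"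
    using group.lagrange[OF PG_group sg] .
  moreover have "order PG = p" using card_P by (simp add: order_def)
  ultimately have dv: "card (V ` carrier G) dvd p" by (metis dvd_triv_right)
  have sub: "V ` carrier G \<subseteq> P" using V_closed by auto
  have fin: "finite (V ` carrier G)" using finG by simp
  have V1: "V \<one> = \<one>" using group_hom.hom_one[OF V_hom] by simp
  have "\<one> \<in> V ` carrier G" using V1 imageI[OF one_closed, of V] by simp
  moreover have "V x \<in> V ` carrier G" using imageI[OF xG] .
  ultimately have "{\<one>, V x} \<subseteq> V ` carrier G" by simp
  then have "card {\<one>, V x} \<le> card (V ` carrier G)" using fin card_mono by metis
  then have "2 \<le> card (V ` carrier G)" using V_x by simp
  moreover have "card (V ` carrier G) = 1 \<or> card (V ` carrier G) = p" using dv pp prime_nat_iff by auto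
  ultimately have "card (V ` carrier G) = card P" using card_P by auto
  moreover have "finite P" using finite_subset[OF P_carrier finG] .
  ultimately show ?thesis using sub card_subset_eq by metis
qed

lemma card_ker: "card (kernel G PG V) * p = order G"
proof -
  have "(G Mod (kernel G PG V)) \<cong> PG"
    using group_hom.FactGroup_iso[OF V_hom] img_V by simp
  then have "card (carrier (G Mod (kernel G PG V))) = card (carrier PG)" by (rule iso_same_card)
  then have "card (rcosets (kernel G PG V)) = p" using card_P by (simp add: FactGroup_def)
  moreover have "card (rcosets (kernel G PG V)) * card (kernel G PG V) = order G"
    using lagrange group_hom.subgroup_kernel[OF V_hom] by metis
  ultimately show ?thesis by (simp add: mult.commute)
qed

lemma ker_char: "kernel G PG V = {g \<in> carrier G. g [^] (order G div p) = \<one>}"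
proof -
  define K where "K = kernel G PG V"
  have cK: "card K = order G div p" using card_ker p_gt1 unfolding K_def by (metis nonzero_mult_div_cancel_right not_one_less_zero neq0_conv)
  have sK: "subgroup K G" unfolding K_def using group_hom.subgroup_kernel[OF V_hom] .
  have pm: "\<not> p dvd (order G div p)"
  proof
    assume "p dvd order G div p"
    then obtain q where "order G div p = p * q" by auto
    then have "order G = p^2 * q" using card_ker cK unfolding K_def by (simp add: power2_eq_square mult_ac)
    then show False using notsq by simp
  qed
  show ?thesis unfolding K_def[symmetric]
  proof
    show "K \<subseteq> {g \<in> carrier G. g [^] (order G div p) = \<one>}"
    proof
      fix g assume g: "g \<in> K"
      have gc: "g \<in> carrier G" using g sK subgroup.subset by auto
      interpret KG: group "G\<lparr>carrier := K\<rparr>" using subgroup_imp_group[OF sK] .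
      have "g [^]\<^bsub>G\<lparr>carrier := K\<rparr>\<^esub> order (G\<lparr>carrier := K\<rparr>) = \<one>"
        using KG.pow_order_eq_1 g by simp
      moreover have "g [^] card K = g [^]\<^bsub>G\<lparr>carrier := K\<rparr>\<^esub> card K" by (rule nat_pow_consistent)
      ultimately have "g [^] card K = \<one>" by (simp add: order_def)
      then show "g \<in> {g \<in> carrier G. g [^] (order G div p) = \<one>}" using gc cK by simp
    qed
    show "{g \<in> carrier G. g [^] (order G div p) = \<one>} \<subseteq> K"
    proof
      fix g assume g: "g \<in> {g \<in> carrier G. g [^] (order G div p) = \<one>}"
      then have gc: "g \<in> carrier G" and gm: "g [^] (order G div p) = \<one>" by auto
      have VgP: "V g \<in> P" using V_closed gc .
      have Vgc: "V g \<in> carrier G" using VgP P_carrier by auto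
      have "V (g [^] (order G div p)) = V g [^]\<^bsub>PG\<^esub> (order G div p)"
        using group_hom.hom_nat_pow[OF V_hom gc] .
      then have "V g [^] (order G div p) = V \<one>" using gm by (simp add: nat_pow_consistent)
      also have "V \<one> = \<one>" using group_hom.hom_one[OF V_hom] by simp
      finally have d1: "ord (V g) dvd (order G div p)" using pow_eq_id[OF Vgc] by simp
      obtain i where i: "V g = x [^] (i::nat)" using VgP unfolding P_def by auto
      have "V g [^] p = \<one>" using i xG x_pow_p by (metis mult.commute nat_pow_one nat_pow_pow)
      then have d2: "ord (V g) dvd p" using pow_eq_id[OF Vgc] by simp
      have "ord (V g) = 1 \<or> ord (V g) = p" using d2 pp prime_nat_iff by auto
      then have "ord (V g) = 1" using d1 pm by auto
      then have "V g = \<one>" using ord_eq_1[OF Vgc] by simp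
      then show "g \<in> K" unfolding K_def kernel_def using gc by simp
    qed
  qed
qed

end

lemma normal_complement:
  fixes G (structure)
  assumes grp: "group G" and fin: "finite (carrier G)" and pp: "Factorial_Ring.prime p"
    and pd: "p dvd order G" and nsq: "\<not> p^2 dvd order G"
    and small: "\<And>r. Factorial_Ring.prime r \<Longrightarrow> r dvd order G \<Longrightarrow> p \<le> r"
  shows "subgroup {g \<in> carrier G. g [^] (order G div p) = \<one>} G \<and>
         card {g \<in> carrier G. g [^] (order G div p) = \<one>} * p = order G"
proof -
  interpret group G by (rule grp)
  have syl: "sylow G p 1 (order G div p)"
    using pd pp fin by (simp add: sylow_eq sylow_axioms_def is_group)
  obtain H where H: "subgroup H G" "card H = p" using sylow.sylow_thm[OF syl] by auto
  have "\<exists>y\<in>H. y \<noteq> \<one>"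
  proof (rule ccontr)
    assume "\<not> (\<exists>y\<in>H. y \<noteq> \<one>)"
    then have "H \<subseteq> {\<one>}" by auto
    then have "card H \<le> card {\<one>}" by (intro card_mono) auto
    then have "card H \<le> 1" by simp
    then show False using H prime_gt_1_nat[OF pp] by simp
  qed
  then obtain y where y: "y \<in> H" "y \<noteq> \<one>" by auto
  have yc: "y \<in> carrier G" using y H subgroup.subset by auto
  interpret HG: group "G\<lparr>carrier := H\<rparr>" using subgroup_imp_group[OF H(1)] .
  have "y [^]\<^bsub>G\<lparr>carrier := H\<rparr>\<^esub> order (G\<lparr>carrier := H\<rparr>) = \<one>"
    using HG.pow_order_eq_1 y by simp
  moreover have "y [^] p = y [^]\<^bsub>G\<lparr>carrier := H\<rparr>\<^esub> p" by (rule nat_pow_consistent)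
  ultimately have "y [^] p = \<one>" using H by (simp add: order_def)
  then have "ord y dvd p" using pow_eq_id[OF yc] by simp
  moreover have "ord y \<noteq> 1" using ord_eq_1[OF yc] y by simp
  ultimately have oy: "ord y = p" using pp prime_nat_iff by auto
  interpret TC: tctx G p y
    using fin pp yc oy small nsq by (simp add: tctx_def tctx_axioms_def is_group)
  show ?thesis using TC.ker_char[symmetric] group_hom.subgroup_kernel[OF TC.V_hom] TC.card_ker by simp
qed


lemma pow_sub: "pow (G\<lparr>carrier := H\<rparr>) a n = pow G a (n::nat)"
  by (simp add: nat_pow_def)

lemma (in group) fin_subgroupI:
  assumes fin: "finite (carrier G)" and sub: "H \<subseteq> carrier G" and one: "\<one> \<in> H"
    and mult: "\<And>a b. a \<in> H \<Longrightarrow> b \<in> H \<Longrightarrow> a \<otimes> b \<in> H"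
  shows "subgroup H G"
proof (rule subgroupI[OF sub])
  show "H \<noteq> {}" using one by auto
  show "\<And>a b. a \<in> H \<Longrightarrow> b \<in> H \<Longrightarrow> a \<otimes> b \<in> H" by (rule mult)
  fix a assume a: "a \<in> H"
  have ac: "a \<in> carrier G" using a sub by auto
  have powH: "a [^] (n::nat) \<in> H" for n by (induction n) (use one mult a in auto)
  have "order G \<noteq> 0" using fin order_gt_0_iff_finite by auto
  then obtain k where k: "order G = Suc k" by (cases "order G") auto
  have "a [^] k \<otimes> a = \<one>" using pow_order_eq_1[OF ac] k by simp
  then have "inv a = a [^] k" using inv_equality ac by simp
  then show "inv a \<in> H" using powH by simp
qed

locale bctx =
  fixes A M :: "'a monoid"
  assumes br: "brace A M" and finB: "finite (carrier A)" and sqf: "squarefree (card (carrier A))"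
begin

lemma grpA: "group A" using br unfolding brace_def by simp
lemma grpM: "group M" using br unfolding brace_def by simp
lemma carM: "carrier M = carrier A" using br unfolding brace_def by simp
lemma distr: "a \<in> carrier A \<Longrightarrow> b \<in> carrier A \<Longrightarrow> c \<in> carrier A \<Longrightarrow>
  a \<otimes>\<^bsub>M\<^esub> (b \<otimes>\<^bsub>A\<^esub> c) = (a \<otimes>\<^bsub>M\<^esub> b) \<otimes>\<^bsub>A\<^esub> inv\<^bsub>A\<^esub> a \<otimes>\<^bsub>A\<^esub> (a \<otimes>\<^bsub>M\<^esub> c)"
  using br unfolding brace_def by simp

lemma mclosed: "a \<in> carrier A \<Longrightarrow> b \<in> carrier A \<Longrightarrow> a \<otimes>\<^bsub>M\<^esub> b \<in> carrier A"
  using group.is_monoid[OF grpM] monoid.m_closed carM by metis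

lemma one_eq: "\<one>\<^bsub>M\<^esub> = \<one>\<^bsub>A\<^esub>"
proof -
  interpret GA: group A by (rule grpA)
  interpret GM: group M by (rule grpM)
  have o: "\<one>\<^bsub>M\<^esub> \<in> carrier A" using GM.one_closed carM by simp
  have l1: "\<one>\<^bsub>M\<^esub> \<otimes>\<^bsub>M\<^esub> \<one>\<^bsub>A\<^esub> = \<one>\<^bsub>A\<^esub>" using GM.l_one carM GA.one_closed by simp
  have "\<one>\<^bsub>M\<^esub> \<otimes>\<^bsub>M\<^esub> (\<one>\<^bsub>A\<^esub> \<otimes>\<^bsub>A\<^esub> \<one>\<^bsub>A\<^esub>) = (\<one>\<^bsub>M\<^esub> \<otimes>\<^bsub>M\<^esub> \<one>\<^bsub>A\<^esub>) \<otimes>\<^bsub>A\<^esub> inv\<^bsub>A\<^esub> \<one>\<^bsub>M\<^esub> \<otimes>\<^bsub>A\<^esub> (\<one>\<^bsub>M\<^esub> \<otimes>\<^bsub>M\<^esub> \<one>\<^bsub>A\<^esub>)"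
    by (rule distr[OF o GA.one_closed GA.one_closed])
  then have "\<one>\<^bsub>A\<^esub> = inv\<^bsub>A\<^esub> \<one>\<^bsub>M\<^esub>" using l1 o by simp
  then have "inv\<^bsub>A\<^esub> \<one>\<^bsub>A\<^esub> = \<one>\<^bsub>M\<^esub>" using o GA.inv_inv by simp
  then show ?thesis by simp
qed

lemma lam_closed: "a \<in> carrier A \<Longrightarrow> b \<in> carrier A \<Longrightarrow> brace_lambda A M a b \<in> carrier A"
  unfolding brace_lambda_def using group.inv_closed[OF grpA] mclosed group.is_monoid[OF grpA] monoid.m_closed by metis

lemma mult_lam: assumes a: "a \<in> carrier A" and b: "b \<in> carrier A"
  shows "a \<otimes>\<^bsub>M\<^esub> b = a \<otimes>\<^bsub>A\<^esub> brace_lambda A M a b"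
  unfolding brace_lambda_def using group.cancel2[OF grpA a mclosed[OF a b]] by simp

lemma lam_mult: assumes a: "a \<in> carrier A" and u: "u \<in> carrier A" and v: "v \<in> carrier A"
  shows "brace_lambda A M a (u \<otimes>\<^bsub>A\<^esub> v) = brace_lambda A M a u \<otimes>\<^bsub>A\<^esub> brace_lambda A M a v"
proof -
  interpret GA: group A by (rule grpA)
  show ?thesis unfolding brace_lambda_def distr[OF a u v]
    using a mclosed[OF a u] mclosed[OF a v] by (simp add: GA.m_assoc)
qed

lemma lam_one: assumes a: "a \<in> carrier A" shows "brace_lambda A M a \<one>\<^bsub>A\<^esub> = \<one>\<^bsub>A\<^esub>"
proof -
  interpret GA: group A by (rule grpA)
  interpret GM: group M by (rule grpM)
  have "a \<otimes>\<^bsub>M\<^esub> \<one>\<^bsub>A\<^esub> = a" using GM.r_one a carM one_eq by metis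
  then show ?thesis unfolding brace_lambda_def using a by simp
qed

lemma lam_pow: assumes a: "a \<in> carrier A" and u: "u \<in> carrier A"
  shows "brace_lambda A M a (u [^]\<^bsub>A\<^esub> (n::nat)) = (brace_lambda A M a u) [^]\<^bsub>A\<^esub> n"
proof (induction n)
  case 0 then show ?case using lam_one a by simp
next
  case (Suc n)
  interpret GA: group A by (rule grpA)
  show ?case using Suc lam_mult[OF a GA.nat_pow_closed[OF u, of n] u] by simp
qed

lemma ideal_step:
  assumes J: "brace_ideal A M J" and ne: "J \<noteq> {\<one>\<^bsub>A\<^esub>}"
  shows "\<exists>K. brace_ideal A M K \<and> K \<subseteq> J \<and> card K < card J \<and>
             Factorial_Ring.prime (card (brace_factor A K J))"
proof -
  interpret GA: group A by (rule grpA)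
  interpret GM: group M by (rule grpM)
  have sJA: "subgroup J A" and sJM: "subgroup J M" and nJA: "J \<lhd> A" and nJM: "J \<lhd> M"
    and lJ: "\<And>b x. b \<in> carrier A \<Longrightarrow> x \<in> J \<Longrightarrow> brace_lambda A M b x \<in> J"
    using J unfolding brace_ideal_def by auto
  have JB: "J \<subseteq> carrier A" using sJA subgroup.subset by auto
  have finJ: "finite J" using finite_subset[OF JB finB] .
  have oneJ: "\<one>\<^bsub>A\<^esub> \<in> J" using subgroup.one_closed[OF sJA] by simp
  define n where "n = card J"
  have "card (rcosets\<^bsub>A\<^esub> J) * card J = order A" using GA.lagrange[OF sJA] .
  then have n_dvd: "n dvd card (carrier A)" unfolding n_def order_def by (metis dvd_triv_right)
  have sqn: "squarefree n" using squarefree_mono[OF n_dvd sqf] .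
  have n0: "n \<noteq> 0" unfolding n_def using finJ oneJ by auto
  have n1: "n \<noteq> 1"
  proof
    assume "n = 1"
    then obtain z where "J = {z}" unfolding n_def using card_1_singletonE by metis
    then show False using oneJ ne by simp
  qed
  define S where "S = {r. Factorial_Ring.prime r \<and> r dvd n}"
  have Sne: "S \<noteq> {}" unfolding S_def using prime_factor_nat[OF n1] by auto
  have Sfin: "finite S"
  proof (rule finite_subset)
    show "S \<subseteq> {..n}" unfolding S_def using n0 by (auto dest: dvd_imp_le)
  qed simp
  define p where "p = Min S"
  have pS: "p \<in> S" unfolding p_def using Min_in[OF Sfin Sne] .
  then have pp: "Factorial_Ring.prime p" and pn: "p dvd n" unfolding S_def by auto
  have pmin: "p \<le> r" if "Factorial_Ring.prime r" "r dvd n" for r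
    unfolding p_def using Min_le[OF Sfin] that S_def by auto
  have nsq: "\<not> p^2 dvd n"
  proof
    assume "p^2 dvd n"
    then have "p dvd 1" using sqn unfolding squarefree_def by auto
    then show False using pp by simp
  qed
  have p1: "1 < p" using prime_gt_1_nat[OF pp] .
  define GA' where "GA' = A\<lparr>carrier := J\<rparr>"
  define GM' where "GM' = M\<lparr>carrier := J\<rparr>"
  have gA: "group GA'" unfolding GA'_def using GA.subgroup_imp_group[OF sJA] .
  have gM: "group GM'" unfolding GM'_def using GM.subgroup_imp_group[OF sJM] .
  have oA: "order GA' = n" unfolding GA'_def n_def order_def by simp
  have oM: "order GM' = n" unfolding GM'_def n_def order_def by simp
  define m where "m = n div p"
  define K where "K = {g \<in> J. g [^]\<^bsub>A\<^esub> m = \<one>\<^bsub>A\<^esub>}"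
  define KM where "KM = {g \<in> J. g [^]\<^bsub>M\<^esub> m = \<one>\<^bsub>M\<^esub>}"
  have NA: "subgroup K GA' \<and> card K * p = n"
  proof -
    have "subgroup {g \<in> carrier GA'. g [^]\<^bsub>GA'\<^esub> (order GA' div p) = \<one>\<^bsub>GA'\<^esub>} GA' \<and>
         card {g \<in> carrier GA'. g [^]\<^bsub>GA'\<^esub> (order GA' div p) = \<one>\<^bsub>GA'\<^esub>} * p = order GA'"
      by (rule normal_complement[OF gA _ pp]) (use finJ pn nsq pmin oA in \<open>auto simp: GA'_def\<close>)
    moreover have "{g \<in> carrier GA'. g [^]\<^bsub>GA'\<^esub> (order GA' div p) = \<one>\<^bsub>GA'\<^esub>} = K"
      unfolding K_def m_def oA by (simp add: GA'_def pow_sub)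
    ultimately show ?thesis using oA by simp
  qed
  have NM: "subgroup KM GM' \<and> card KM * p = n"
  proof -
    have "subgroup {g \<in> carrier GM'. g [^]\<^bsub>GM'\<^esub> (order GM' div p) = \<one>\<^bsub>GM'\<^esub>} GM' \<and>
         card {g \<in> carrier GM'. g [^]\<^bsub>GM'\<^esub> (order GM' div p) = \<one>\<^bsub>GM'\<^esub>} * p = order GM'"
      by (rule normal_complement[OF gM _ pp]) (use finJ pn nsq pmin oM in \<open>auto simp: GM'_def\<close>)
    moreover have "{g \<in> carrier GM'. g [^]\<^bsub>GM'\<^esub> (order GM' div p) = \<one>\<^bsub>GM'\<^esub>} = KM"
      unfolding KM_def m_def oM by (simp add: GM'_def pow_sub)
    ultimately show ?thesis using oM by simp
  qed
  have KJ: "K \<subseteq> J" unfolding K_def by auto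
  have KB: "K \<subseteq> carrier A" using KJ JB by auto
  have finK: "finite K" using finite_subset[OF KJ finJ] .
  have K1: "\<one>\<^bsub>A\<^esub> \<in> K" unfolding K_def using oneJ by simp
  have Kmult: "a \<otimes>\<^bsub>A\<^esub> b \<in> K" if "a \<in> K" "b \<in> K" for a b
    using subgroup.m_closed[OF conjunct1[OF NA] that] unfolding GA'_def by simp
  have sKA: "subgroup K A" by (rule GA.fin_subgroupI[OF finB KB K1 Kmult])
  have powK: "g [^]\<^bsub>A\<^esub> m = \<one>\<^bsub>A\<^esub>" if "g \<in> K" for g using that unfolding K_def by simp
  have KmultM: "a \<otimes>\<^bsub>M\<^esub> b \<in> K" if a: "a \<in> K" and b: "b \<in> K" for a b
  proof -
    have ac: "a \<in> carrier A" and bc: "b \<in> carrier A" using a b KB by auto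
    have lJ': "brace_lambda A M a b \<in> J" using lJ ac b KJ by auto
    have "brace_lambda A M a b [^]\<^bsub>A\<^esub> m = brace_lambda A M a (b [^]\<^bsub>A\<^esub> m)"
      using lam_pow[OF ac bc] by simp
    also have "\<dots> = \<one>\<^bsub>A\<^esub>" using powK[OF b] lam_one[OF ac] by simp
    finally have "brace_lambda A M a b \<in> K" unfolding K_def using lJ' by simp
    then show ?thesis using mult_lam[OF ac bc] Kmult a by simp
  qed
  have sKM: "subgroup K M"
    by (rule GM.fin_subgroupI) (use finB carM KB K1 one_eq KmultM in auto)
  have cK: "card K = m" using NA p1 unfolding m_def by (metis nonzero_mult_div_cancel_right not_one_less_zero neq0_conv)
  have KKM: "K \<subseteq> KM"
  proof
    fix g assume g: "g \<in> K"
    interpret KG: group "M\<lparr>carrier := K\<rparr>" using GM.subgroup_imp_group[OF sKM] .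
    have "g [^]\<^bsub>M\<lparr>carrier := K\<rparr>\<^esub> order (M\<lparr>carrier := K\<rparr>) = \<one>\<^bsub>M\<lparr>carrier := K\<rparr>\<^esub>"
      using KG.pow_order_eq_1 g by simp
    then have "g [^]\<^bsub>M\<^esub> m = \<one>\<^bsub>M\<^esub>" using cK by (simp add: order_def pow_sub)
    then show "g \<in> KM" unfolding KM_def using g KJ by auto
  qed
  have finKM: "finite KM" using finJ unfolding KM_def by simp
  have "card KM = card K" using NA NM p1 by (metis mult_right_cancel not_one_less_zero neq0_conv)
  then have KeqM: "K = KM" using card_subset_eq[OF finKM KKM] by simp
  have nKA: "K \<lhd> A"
    unfolding GA.normal_inv_iff
  proof (intro conjI ballI)
    show "subgroup K A" by (rule sKA)
    fix x h assume x: "x \<in> carrier A" and h: "h \<in> K"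
    have hc: "h \<in> carrier A" using h KB by auto
    have "x \<otimes>\<^bsub>A\<^esub> h \<otimes>\<^bsub>A\<^esub> inv\<^bsub>A\<^esub> x \<in> J"
      using nJA x h KJ unfolding GA.normal_inv_iff by auto
    moreover have "(x \<otimes>\<^bsub>A\<^esub> h \<otimes>\<^bsub>A\<^esub> inv\<^bsub>A\<^esub> x) [^]\<^bsub>A\<^esub> m = \<one>\<^bsub>A\<^esub>"
      using GA.conj_pow[OF x hc, of m, symmetric] powK[OF h] x by simp
    ultimately show "x \<otimes>\<^bsub>A\<^esub> h \<otimes>\<^bsub>A\<^esub> inv\<^bsub>A\<^esub> x \<in> K" unfolding K_def by simp
  qed
  have nKM: "K \<lhd> M"
    unfolding GM.normal_inv_iff
  proof (intro conjI ballI)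
    show "subgroup K M" by (rule sKM)
    fix x h assume x: "x \<in> carrier M" and h: "h \<in> K"
    have hc: "h \<in> carrier M" using h KB carM by auto
    have hp: "h [^]\<^bsub>M\<^esub> m = \<one>\<^bsub>M\<^esub>" using h KeqM unfolding KM_def by auto
    have "x \<otimes>\<^bsub>M\<^esub> h \<otimes>\<^bsub>M\<^esub> inv\<^bsub>M\<^esub> x \<in> J"
      using nJM x h KJ unfolding GM.normal_inv_iff by auto
    moreover have "(x \<otimes>\<^bsub>M\<^esub> h \<otimes>\<^bsub>M\<^esub> inv\<^bsub>M\<^esub> x) [^]\<^bsub>M\<^esub> m = \<one>\<^bsub>M\<^esub>"
      using GM.conj_pow[OF x hc, of m, symmetric] hp x by simp
    ultimately have "x \<otimes>\<^bsub>M\<^esub> h \<otimes>\<^bsub>M\<^esub> inv\<^bsub>M\<^esub> x \<in> KM" unfolding KM_def by simp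
    then show "x \<otimes>\<^bsub>M\<^esub> h \<otimes>\<^bsub>M\<^esub> inv\<^bsub>M\<^esub> x \<in> K" using KeqM by simp
  qed
  have lamK: "brace_lambda A M b x \<in> K" if b: "b \<in> carrier A" and x: "x \<in> K" for b x
  proof -
    have xc: "x \<in> carrier A" using x KB by auto
    have "brace_lambda A M b x [^]\<^bsub>A\<^esub> m = brace_lambda A M b (x [^]\<^bsub>A\<^esub> m)"
      using lam_pow[OF b xc] by simp
    also have "\<dots> = \<one>\<^bsub>A\<^esub>" using powK[OF x] lam_one[OF b] by simp
    finally show ?thesis unfolding K_def using lJ b x KJ by auto
  qed
  have idK: "brace_ideal A M K" unfolding brace_ideal_def using sKA sKM nKA nKM lamK by auto
  have cK0: "0 < card K" using finK K1 card_gt_0_iff by auto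
  have ltK: "card K < card J" using NA p1 cK0 unfolding n_def by (metis mult.right_neutral mult_less_cancel1)
  have bfeq: "brace_factor A K J = rcosets\<^bsub>GA'\<^esub> K"
    unfolding brace_factor_def RCOSETS_def r_coset_def GA'_def by auto
  have "card (rcosets\<^bsub>GA'\<^esub> K) * card K = order GA'"
    using group.lagrange[OF gA conjunct1[OF NA]] .
  then have "card (brace_factor A K J) * card K = card K * p" using bfeq oA NA by simp
  then have "card (brace_factor A K J) = p" using cK0 by (simp add: mult.commute)
  then show ?thesis using idK KJ ltK pp by auto
qed

lemma chain:
  "brace_ideal A M J \<Longrightarrow> \<exists>(I :: nat \<Rightarrow> 'a set) n. I 0 = {\<one>\<^bsub>A\<^esub>} \<and> I n = J \<and>
      (\<forall>i\<le>n. brace_ideal A M (I i)) \<and>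
      (\<forall>i<n. I i \<subseteq> I (Suc i) \<and> Factorial_Ring.prime (card (brace_factor A (I i) (I (Suc i)))))"
proof (induction "card J" arbitrary: J rule: less_induct)
  case less
  show ?case
  proof (cases "J = {\<one>\<^bsub>A\<^esub>}")
    case True
    show ?thesis
      by (rule exI[of _ "\<lambda>_. J"], rule exI[of _ 0]) (use True less.prems in auto)
  next
    case False
    obtain K where K: "brace_ideal A M K" "K \<subseteq> J" "card K < card J"
      "Factorial_Ring.prime (card (brace_factor A K J))"
      using ideal_step[OF less.prems False] by auto
    obtain I n where I: "I 0 = {\<one>\<^bsub>A\<^esub>}" "I n = K" "\<forall>i\<le>n. brace_ideal A M (I i)"
      "\<forall>i<n. I i \<subseteq> I (Suc i) \<and> Factorial_Ring.prime (card (brace_factor A (I i) (I (Suc i))))"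
      using less.hyps[OF K(3) K(1)] by auto
    define I' where "I' = (\<lambda>i. if i \<le> n then I i else J)"
    have a: "I' 0 = {\<one>\<^bsub>A\<^esub>}" unfolding I'_def using I(1) by simp
    have b: "I' (Suc n) = J" unfolding I'_def by simp
    have c: "\<forall>i\<le>Suc n. brace_ideal A M (I' i)" unfolding I'_def using I(3) less.prems by auto
    have d: "\<forall>i<Suc n. I' i \<subseteq> I' (Suc i) \<and> Factorial_Ring.prime (card (brace_factor A (I' i) (I' (Suc i))))"
    proof (intro allI impI)
      fix i assume i: "i < Suc n"
      show "I' i \<subseteq> I' (Suc i) \<and> Factorial_Ring.prime (card (brace_factor A (I' i) (I' (Suc i))))"
      proof (cases "i < n")
        case True
        then show ?thesis unfolding I'_def using I(4) by auto
      next
        case False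
        then have "i = n" using i by simp
        then show ?thesis unfolding I'_def using I(2) K by auto
      qed
    qed
    show ?thesis using a b c d by blast
  qed
qed

lemma carrier_ideal: "brace_ideal A M (carrier A)"
proof -
  interpret GA: group A by (rule grpA)
  interpret GM: group M by (rule grpM)
  have s1: "subgroup (carrier A) A" by (rule GA.subgroup_self)
  have s2: "subgroup (carrier A) M" using GM.subgroup_self carM by simp
  have n1: "carrier A \<lhd> A" unfolding GA.normal_inv_iff using s1 by auto
  have n2: "carrier A \<lhd> M" unfolding GM.normal_inv_iff using s2 carM by auto
  show ?thesis unfolding brace_ideal_def using s1 s2 n1 n2 lam_closed by auto
qed

end

theorem corollary3p9:
  fixes A M :: "'a monoid"
  assumes "brace A M"
    and "finite (carrier A)"
    and "squarefree (card (carrier A))"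
  shows "supersoluble_brace A M"
proof -
  interpret bctx A M using assms by (simp add: bctx_def)
  obtain I n where I: "I 0 = {\<one>\<^bsub>A\<^esub>}" "I n = carrier A" "\<forall>i\<le>n. brace_ideal A M (I i)"
      "\<forall>i<n. I i \<subseteq> I (Suc i) \<and> Factorial_Ring.prime (card (brace_factor A (I i) (I (Suc i))))"
    using chain[OF carrier_ideal] by auto
  show ?thesis unfolding supersoluble_brace_def
    by (rule exI[of _ I], rule exI[of _ n]) (use I in auto)
qed

end
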